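(* Let $\alpha\le 1/2$ and $\lambda\in\mathbb R$. For each $N$ let $X^N$ be the SIS epidemic on $\{0,1,\dots,N\}$ with transmissivity parameter $\beta_N=1+\lambda/N^{\alpha}$, and let $Y^N_t=X^N(N^{\alpha}t)/N^{\alpha}$, a Markov process on $E_N=\{k/N^{\alpha}: k=0,1,\dots,N\}$. For $f\in C_c^\infty[0,\infty)$ and $y\in E_N$ define $$\mathcal G^N f(y)=\lim_{h\to0}\frac{E^N_y\big[f(Y^N_h)-f(y)\big]}{h},$$ where $E^N_y$ denotes expectation with $Y^N_0=y$, and define $$\mathcal G f(y)=\lambda y\, f'(y)+y\,f''(y)\quad\text{if }\alpha<1/2,\qquad \mathcal G f(y)=(\lambda y-y^2)\, f'(y)+y\,f''(y)\quad\text{if }\alpha=1/2.$$ Then for every $f\in C_c^\infty[0,\infty)$, $$\lim_{N\to\infty}\ \sup_{y\in E_N}\big|\mathcal G^N f(y)-\mathcal G f(y)\big|=0.$$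
   Context: The SIS epidemic with population size $N$ and transmissivity parameter $\beta>0$ is the continuous-time birth-death Markov chain on $\{0,1,\dots,N\}$ which jumps from $x$ to $x+1$ at rate $\beta x(1-x/N)$ and from $x$ to $x-1$ at rate $x$. $C_c^\infty[0,\infty)$ denotes smooth functions on $[0,\infty)$ with compact support. *)

theory Defs
  imports "HOL-Analysis.Analysis"
begin

definition sis_Q :: "nat \<Rightarrow> real \<Rightarrow> nat \<Rightarrow> nat \<Rightarrow> real" where
  "sis_Q N \<beta> x z =
     (if z = Suc x \<and> Suc x \<le> N then \<beta> * real x * (1 - real x / real N)
      else if Suc z = x then real x
      else if z = x then - (\<beta> * real x * (1 - real x / real N) + real x)
      else 0)"

fun sis_Qpow :: "nat \<Rightarrow> real \<Rightarrow> nat \<Rightarrow> nat \<Rightarrow> nat \<Rightarrow> real" where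
  "sis_Qpow N \<beta> 0 x z = (if x = z then 1 else 0)"
| "sis_Qpow N \<beta> (Suc k) x z = (\<Sum>w\<in>{0..N}. sis_Q N \<beta> x w * sis_Qpow N \<beta> k w z)"

text \<open>Transition probabilities P_t(x,z) = exp(tQ)(x,z) of the continuous-time chain.\<close>
definition sis_trans :: "nat \<Rightarrow> real \<Rightarrow> real \<Rightarrow> nat \<Rightarrow> nat \<Rightarrow> real" where
  "sis_trans N \<beta> t x z = (\<Sum>k. t ^ k / fact k * sis_Qpow N \<beta> k x z)"

definition beta_N :: "real \<Rightarrow> real \<Rightarrow> nat \<Rightarrow> real" where
  "beta_N \<alpha> lam N = 1 + lam / real N powr \<alpha>"

text \<open>E^N_y[f(Y^N_h)] for Y^N_t = X^N(N^alpha t)/N^alpha, started at y = x/N^alpha.\<close>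
definition Y_expect :: "real \<Rightarrow> real \<Rightarrow> nat \<Rightarrow> (real \<Rightarrow> real) \<Rightarrow> nat \<Rightarrow> real \<Rightarrow> real" where
  "Y_expect \<alpha> lam N f x h =
     (\<Sum>z\<in>{0..N}. sis_trans N (beta_N \<alpha> lam N) (real N powr \<alpha> * h) x z
                    * f (real z / real N powr \<alpha>))"

definition gen_N :: "real \<Rightarrow> real \<Rightarrow> nat \<Rightarrow> (real \<Rightarrow> real) \<Rightarrow> nat \<Rightarrow> real" where
  "gen_N \<alpha> lam N f x =
     Lim (at_right 0) (\<lambda>h. (Y_expect \<alpha> lam N f x h - f (real x / real N powr \<alpha>)) / h)"

text \<open>f in C_c^infinity[0,infinity): F n is the n-th derivative of f on [0,infinity)
(one-sided at 0), and f vanishes outside a bounded set.\<close>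
definition smooth_cc :: "(nat \<Rightarrow> real \<Rightarrow> real) \<Rightarrow> bool" where
  "smooth_cc F \<longleftrightarrow>
     (\<forall>n x. x \<ge> 0 \<longrightarrow> (F n has_real_derivative F (Suc n) x) (at x within {0..}))
     \<and> (\<exists>R. \<forall>x. x \<ge> 0 \<and> x > R \<longrightarrow> F 0 x = 0)"

definition gen_lim :: "real \<Rightarrow> real \<Rightarrow> (nat \<Rightarrow> real \<Rightarrow> real) \<Rightarrow> real \<Rightarrow> real" where
  "gen_lim \<alpha> lam F y =
     (if \<alpha> < 1/2 then lam * y * F 1 y + y * F 2 y
      else (lam * y - y^2) * F 1 y + y * F 2 y)"

end

theory Submission
  imports Defs
begin


lemma key:
  fixes s y Y lam f1 f2 Dp Dm rp rm p \<gamma> B B1 B2 :: real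
  assumes s: "s \<ge> 1" and y: "0 \<le> y" "y \<le> Y" and f1: "\<bar>f1\<bar> \<le> B1" and f2: "\<bar>f2\<bar> \<le> B2"
    and rp: "\<bar>rp\<bar> \<le> B / (2 * s^3)" and rm: "\<bar>rm\<bar> \<le> B / (2 * s^3)"
    and p: "0 \<le> p" "p \<le> 1"
    and Dp: "Dp = f1 / s + f2 / (2 * s^2) + rp" and Dm: "Dm = - f1 / s + f2 / (2 * s^2) + rm"
  shows "\<bar>s * ((1 + lam / s) * (s * y) * (1 - p * y / s) * Dp + (s * y) * Dm)
           - (lam * y * f1 + y * f2 - \<gamma> * y^2 * f1)\<bar>
         \<le> (Y*B + \<bar>lam\<bar>*Y*(B2+B) + Y^2*B1 + Y^2*(\<bar>lam\<bar>*B1 + (1+\<bar>lam\<bar>)*(B2+B))) * (1/s + \<bar>p - \<gamma>\<bar>)"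
proof -
  define u where "u = 1 / s"
  have u: "0 < u" "u \<le> 1" "s = 1 / u" using s by (auto simp: u_def)
  have "0 \<le> B / (2 * s^3)" using rp abs_ge_zero[of rp] by linarith
  moreover have "0 < 2 * s^3" using s by simp
  ultimately have B0: "B \<ge> 0" by (simp add: zero_le_divide_iff)
  have B10: "B1 \<ge> 0" and B20: "B2 \<ge> 0" using f1 f2 by auto
  have Y0: "Y \<ge> 0" using y by simp
  have rp': "\<bar>rp\<bar> \<le> B * u^3 / 2" and rm': "\<bar>rm\<bar> \<le> B * u^3 / 2"
    using rp rm u by (simp_all add: power_one_over)
  have eq: "s * ((1 + lam / s) * (s * y) * (1 - p * y / s) * Dp + (s * y) * Dm)
           - (lam * y * f1 + y * f2 - \<gamma> * y^2 * f1)
    = y * (rp + rm) / u^2 + lam * y * (f2 * u / 2 + rp / u)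
      - ((p - \<gamma>) * y^2 * f1 + p * y^2 * (lam * u * f1 + (1 + lam * u) * (f2 * u / 2 + rp / u)))"
    unfolding Dp Dm u(3) using u(1) by (simp add: field_simps power2_eq_square power3_eq_cube)
  have T1: "\<bar>y * (rp + rm) / u^2\<bar> \<le> Y * B * u"
  proof -
    have "\<bar>rp + rm\<bar> \<le> B * u^3" using rp' rm' by linarith
    then have "\<bar>rp + rm\<bar> / u^2 \<le> B * u" using u(1)
      by (simp add: divide_le_eq power2_eq_square power3_eq_cube mult_ac)
    then have "y * (\<bar>rp + rm\<bar> / u^2) \<le> Y * (B * u)" using y Y0 B0 u(1)
      by (intro mult_mono) auto
    then show ?thesis using y by (simp add: abs_mult)
  qed
  have Bu: "B * u^2 / 2 \<le> B * u"
  proof -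
    have "u^2 \<le> u" using u mult_right_mono[OF u(2), of u] by (simp add: power2_eq_square)
    then have "B * u^2 \<le> B * u" using B0 by (rule mult_left_mono)
    moreover have "0 \<le> B * u^2" using B0 by simp
    ultimately show ?thesis by linarith
  qed
  have T2: "\<bar>lam * y * (f2 * u / 2 + rp / u)\<bar> \<le> \<bar>lam\<bar> * Y * (B2 + B) * u"
  proof -
    have a: "\<bar>f2 * u / 2\<bar> \<le> B2 * u" using f2 u B20 by (simp add: abs_mult mult_right_mono)
    have "\<bar>rp / u\<bar> \<le> B * u^2 / 2" using rp' u(1) by (simp add: divide_le_eq power2_eq_square power3_eq_cube mult_ac)
    also have "\<dots> \<le> B * u" by (rule Bu)
    finally have "\<bar>f2 * u / 2 + rp / u\<bar> \<le> (B2 + B) * u" using a abs_triangle_ineq[of "f2 * u / 2" "rp / u"] by (simp add: distrib_right)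
    then have "y * \<bar>f2 * u / 2 + rp / u\<bar> \<le> Y * ((B2 + B) * u)" using y
      by (intro mult_mono) auto
    then have "\<bar>lam\<bar> * (y * \<bar>f2 * u / 2 + rp / u\<bar>) \<le> \<bar>lam\<bar> * (Y * ((B2 + B) * u))"
      by (rule mult_left_mono) simp
    then show ?thesis using y by (simp add: abs_mult mult_ac)
  qed
  have y2: "y^2 \<le> Y^2" using y by (simp add: power_mono)
  have T3: "\<bar>(p - \<gamma>) * y^2 * f1\<bar> \<le> Y^2 * B1 * \<bar>p - \<gamma>\<bar>"
    using y2 f1 by (simp add: abs_mult mult_mono' mult_ac)
  have T4: "\<bar>p * y^2 * (lam * u * f1 + (1 + lam * u) * (f2 * u / 2 + rp / u))\<bar>
      \<le> Y^2 * (\<bar>lam\<bar> * B1 + (1 + \<bar>lam\<bar>) * (B2 + B)) * u"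
  proof -
    have a: "\<bar>lam * u * f1\<bar> \<le> \<bar>lam\<bar> * B1 * u" using f1 u by (simp add: abs_mult mult_right_mono mult_ac)
    have "\<bar>lam * u\<bar> \<le> \<bar>lam\<bar> * 1" unfolding abs_mult using u
      by (intro mult_left_mono) auto
    then have b: "\<bar>1 + lam * u\<bar> \<le> 1 + \<bar>lam\<bar>" using abs_triangle_ineq[of 1 "lam * u"] by simp
    have c0: "\<bar>f2 * u / 2\<bar> \<le> B2 * u" using f2 u B20 by (simp add: abs_mult mult_right_mono)
    have "\<bar>rp / u\<bar> \<le> B * u^2 / 2" using rp' u(1) by (simp add: divide_le_eq power2_eq_square power3_eq_cube mult_ac)
    also have "\<dots> \<le> B * u" by (rule Bu)
    finally have c: "\<bar>f2 * u / 2 + rp / u\<bar> \<le> (B2 + B) * u" using c0 abs_triangle_ineq[of "f2 * u / 2" "rp / u"] by (simp add: distrib_right)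
    have "\<bar>(1 + lam * u) * (f2 * u / 2 + rp / u)\<bar> \<le> (1 + \<bar>lam\<bar>) * ((B2 + B) * u)"
      unfolding abs_mult by (rule mult_mono[OF b c]) auto
    then have d: "\<bar>lam * u * f1 + (1 + lam * u) * (f2 * u / 2 + rp / u)\<bar> \<le> (\<bar>lam\<bar> * B1 + (1 + \<bar>lam\<bar>) * (B2 + B)) * u"
    proof -
      have eqd: "(\<bar>lam\<bar> * B1 + (1 + \<bar>lam\<bar>) * (B2 + B)) * u = \<bar>lam\<bar> * B1 * u + (1 + \<bar>lam\<bar>) * ((B2 + B) * u)"
        by (simp add: algebra_simps)
      then show ?thesis using a eqd abs_triangle_ineq[of "lam * u * f1" "(1 + lam * u) * (f2 * u / 2 + rp / u)"] \<open>\<bar>(1 + lam * u) * (f2 * u / 2 + rp / u)\<bar> \<le> (1 + \<bar>lam\<bar>) * ((B2 + B) * u)\<close>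
        by linarith
    qed
    have e: "\<bar>p * y^2\<bar> \<le> Y^2" using p y2 mult_right_mono[OF p(2), of "y^2"] by (simp add: abs_mult)
    show ?thesis using mult_mono[OF e d] by (simp add: abs_mult mult_ac)
  qed
  have "\<bar>s * ((1 + lam / s) * (s * y) * (1 - p * y / s) * Dp + (s * y) * Dm)
           - (lam * y * f1 + y * f2 - \<gamma> * y^2 * f1)\<bar>
     \<le> Y * B * u + \<bar>lam\<bar> * Y * (B2 + B) * u + Y^2 * B1 * \<bar>p - \<gamma>\<bar> + Y^2 * (\<bar>lam\<bar> * B1 + (1 + \<bar>lam\<bar>) * (B2 + B)) * u"
    unfolding eq using T1 T2 T3 T4 by linarith
  also have "\<dots> \<le> (Y*B + \<bar>lam\<bar>*Y*(B2+B) + Y^2*B1 + Y^2*(\<bar>lam\<bar>*B1 + (1+\<bar>lam\<bar>)*(B2+B))) * (u + \<bar>p - \<gamma>\<bar>)"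
  proof -
    have nn: "0 \<le> Y*B" "0 \<le> \<bar>lam\<bar>*Y*(B2+B)" "0 \<le> Y^2*B1" "0 \<le> Y^2*(\<bar>lam\<bar>*B1 + (1+\<bar>lam\<bar>)*(B2+B))"
      using Y0 B0 B10 B20 by auto
    have "\<And>a. 0 \<le> a \<Longrightarrow> a * u \<le> a * (u + \<bar>p - \<gamma>\<bar>)" by (simp add: mult_left_mono)
    moreover have "\<And>a. 0 \<le> a \<Longrightarrow> a * \<bar>p - \<gamma>\<bar> \<le> a * (u + \<bar>p - \<gamma>\<bar>)" using u(1) by (simp add: mult_left_mono)
    ultimately have "Y*B * u \<le> Y*B * (u + \<bar>p - \<gamma>\<bar>)"
      "\<bar>lam\<bar>*Y*(B2+B) * u \<le> \<bar>lam\<bar>*Y*(B2+B) * (u + \<bar>p - \<gamma>\<bar>)"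
      "Y^2*B1 * \<bar>p - \<gamma>\<bar> \<le> Y^2*B1 * (u + \<bar>p - \<gamma>\<bar>)"
      "Y^2*(\<bar>lam\<bar>*B1 + (1+\<bar>lam\<bar>)*(B2+B)) * u \<le> Y^2*(\<bar>lam\<bar>*B1 + (1+\<bar>lam\<bar>)*(B2+B)) * (u + \<bar>p - \<gamma>\<bar>)"
      using nn by blast+
    then show ?thesis by (simp only: distrib_right)
  qed
  finally show ?thesis by (simp add: u_def)
qed



definition QM :: "nat \<Rightarrow> real \<Rightarrow> real" where
  "QM N \<beta> = (\<Sum>x\<in>{0..N}. \<Sum>w\<in>{0..N}. \<bar>sis_Q N \<beta> x w\<bar>)"

lemma Qpow_bound: "x \<le> N \<Longrightarrow> \<bar>sis_Qpow N \<beta> k x z\<bar> \<le> QM N \<beta> ^ k"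
proof (induction k arbitrary: x)
  case 0 then show ?case by simp
next
  case (Suc k)
  have "\<bar>sis_Qpow N \<beta> (Suc k) x z\<bar> \<le> (\<Sum>w\<in>{0..N}. \<bar>sis_Q N \<beta> x w\<bar> * QM N \<beta> ^ k)"
    unfolding sis_Qpow.simps
    by (rule order_trans[OF sum_abs]) (auto intro!: sum_mono mult_left_mono Suc.IH simp: abs_mult)
  also have "\<dots> = (\<Sum>w\<in>{0..N}. \<bar>sis_Q N \<beta> x w\<bar>) * QM N \<beta> ^ k"
    by (simp add: sum_distrib_right)
  also have "\<dots> \<le> QM N \<beta> * QM N \<beta> ^ k"
  proof (rule mult_right_mono)
    show "(\<Sum>w\<in>{0..N}. \<bar>sis_Q N \<beta> x w\<bar>) \<le> QM N \<beta>"
      unfolding QM_def using Suc.prems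
      by (intro member_le_sum[where f="\<lambda>x. \<Sum>w\<in>{0..N}. \<bar>sis_Q N \<beta> x w\<bar>", simplified])
         (auto intro: sum_nonneg)
    show "0 \<le> QM N \<beta> ^ k" unfolding QM_def by (auto intro!: zero_le_power sum_nonneg)
  qed
  finally show ?case by simp
qed

lemma trans_eq: "sis_trans N \<beta> t x z = (\<Sum>k. sis_Qpow N \<beta> k x z / fact k * t ^ k)"
  unfolding sis_trans_def by (simp add: mult.commute mult.left_commute)

lemma trans_zero: "sis_trans N \<beta> 0 x z = (if x = z then 1 else 0)"
  unfolding trans_eq using powser_zero[of "\<lambda>k. sis_Qpow N \<beta> k x z / fact k"] by simp

lemma trans_deriv:
  assumes "x \<le> N" "z \<le> N"
  shows "((\<lambda>t. sis_trans N \<beta> t x z) has_field_derivative sis_Q N \<beta> x z) (at 0)"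
proof -
  let ?c = "\<lambda>k. sis_Qpow N \<beta> k x z / fact k"
  have sm: "summable (\<lambda>n. ?c n * 1 ^ n)"
  proof (rule summable_comparison_test')
    show "summable (\<lambda>n. inverse (fact n) * QM N \<beta> ^ n)" by (rule summable_exp)
    fix n :: nat
    show "norm (?c n * 1 ^ n) \<le> inverse (fact n) * QM N \<beta> ^ n"
      using Qpow_bound[OF assms(1), of \<beta> n z]
      by (simp add: divide_inverse mult.commute abs_mult mult_left_mono)
  qed
  have "((\<lambda>t. \<Sum>n. ?c n * t ^ n) has_field_derivative (\<Sum>n. diffs ?c n * 0 ^ n)) (at 0)"
    by (rule termdiffs_strong[OF sm]) simp
  moreover have "(\<Sum>n. diffs ?c n * 0 ^ n) = sis_Q N \<beta> x z"
  proof -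
    have "(\<Sum>n. diffs ?c n * 0 ^ n) = diffs ?c 0" by (rule powser_zero)
    also have "\<dots> = sis_Q N \<beta> x z" using assms
      by (simp add: diffs_def if_distrib cong: if_cong)
    finally show ?thesis .
  qed
  ultimately show ?thesis unfolding trans_eq by simp
qed

lemma gen_N_eq:
  assumes "x \<le> N"
  shows "gen_N \<alpha> lam N f x = real N powr \<alpha> *
     (\<Sum>z\<in>{0..N}. sis_Q N (beta_N \<alpha> lam N) x z * f (real z / real N powr \<alpha>))"
proof -
  define s where "s = real N powr \<alpha>"
  define \<beta> where "\<beta> = beta_N \<alpha> lam N"
  define g where "g = (\<lambda>h. Y_expect \<alpha> lam N f x h)"
  have d: "(g has_field_derivative
      (\<Sum>z\<in>{0..N}. sis_Q N \<beta> x z * s * f (real z / s))) (at 0)"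
    unfolding g_def Y_expect_def s_def[symmetric] \<beta>_def[symmetric]
  proof (rule DERIV_sum, rule DERIV_cmult_right)
    fix z assume "z \<in> {0..N}"
    then have "((\<lambda>t. sis_trans N \<beta> t x z) has_field_derivative sis_Q N \<beta> x z) (at (s * 0))"
      using trans_deriv[OF assms] by simp
    from DERIV_chain2[where f="\<lambda>t. sis_trans N \<beta> t x z" and g="\<lambda>h. s * h", OF this]
    show "((\<lambda>h. sis_trans N \<beta> (s * h) x z) has_field_derivative sis_Q N \<beta> x z * s) (at 0)"
      by (auto intro!: derivative_eq_intros)
  qed
  have g0: "g 0 = f (real x / s)"
    unfolding g_def Y_expect_def s_def[symmetric] using assms
    by (simp add: trans_zero if_distrib[where f="\<lambda>a. a * _"] cong: if_cong)
  have "((\<lambda>h. (g (0 + h) - g 0) / h) \<longlongrightarrow>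
      (\<Sum>z\<in>{0..N}. sis_Q N \<beta> x z * s * f (real z / s))) (at 0)"
    using d unfolding DERIV_def .
  then have "((\<lambda>h. (g h - f (real x / s)) / h) \<longlongrightarrow>
      (\<Sum>z\<in>{0..N}. sis_Q N \<beta> x z * s * f (real z / s))) (at_right 0)"
    using g0 by (auto intro: tendsto_mono[OF at_le])
  then have "gen_N \<alpha> lam N f x = (\<Sum>z\<in>{0..N}. sis_Q N \<beta> x z * s * f (real z / s))"
    unfolding gen_N_def g_def s_def by (intro tendsto_Lim) auto
  then show ?thesis unfolding s_def \<beta>_def by (simp add: sum_distrib_left mult_ac)
qed

lemma sumQ:
  assumes "x \<le> N" "0 < N"
  shows "(\<Sum>z\<in>{0..N}. sis_Q N \<beta> x z * g z) =
     \<beta> * real x * (1 - real x / real N) * (g (Suc x) - g x) + real x * (g (x - 1) - g x)"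
proof -
  define b where "b = \<beta> * real x * (1 - real x / real N)"
  have bN: "x = N \<Longrightarrow> b = 0" using assms by (simp add: b_def)
  have "\<And>z. z \<in> {0..N} \<Longrightarrow> sis_Q N \<beta> x z * g z =
     (if z = Suc x then b * g (Suc x) else 0) + (if z = x - 1 \<and> 0 < x then real x * g (x - 1) else 0)
     + (if z = x then - (b + real x) * g x else 0)"
    using bN by (auto simp: sis_Q_def b_def)
  then have "(\<Sum>z\<in>{0..N}. sis_Q N \<beta> x z * g z) =
     (\<Sum>z\<in>{0..N}. (if z = Suc x then b * g (Suc x) else 0) + (if z = x - 1 \<and> 0 < x then real x * g (x - 1) else 0)
     + (if z = x then - (b + real x) * g x else 0))" by (rule sum.cong[OF refl])
  also have "\<dots> = (if Suc x \<le> N then b * g (Suc x) else 0) + (if 0 < x then real x * g (x - 1) else 0)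
     - (b + real x) * g x"
    using assms by (simp add: sum.distrib sum.delta' algebra_simps)
  also have "\<dots> = b * (g (Suc x) - g x) + real x * (g (x - 1) - g x)"
    using bN assms by (auto simp: algebra_simps)
  finally show ?thesis unfolding b_def .
qed

lemma smooth_vanish:
  assumes "smooth_cc F"
  obtains R where "R \<ge> 0" "\<And>n x. x > R \<Longrightarrow> F n x = 0"
proof -
  from assms obtain R0 where R0: "\<And>x. x \<ge> 0 \<Longrightarrow> x > R0 \<Longrightarrow> F 0 x = 0"
    unfolding smooth_cc_def by blast
  define R where "R = max R0 0"
  have "\<forall>x. x > R \<longrightarrow> F n x = 0" for n
  proof (induction n)
    case 0 then show ?case using R0 by (auto simp: R_def)
  next
    case (Suc n)
    show ?case
    proof (intro allI impI)
      fix x assume x: "x > R"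
      then have x0: "x \<ge> 0" by (simp add: R_def)
      have "(F n has_field_derivative F (Suc n) x) (at x within {0..})"
        using assms x0 unfolding smooth_cc_def by blast
      moreover have "at x within {0..} = at x"
        using x R_def by (intro at_within_interior) auto
      ultimately have d: "(F n has_field_derivative F (Suc n) x) (at x)" by simp
      have "((\<lambda>_. 0) has_field_derivative F (Suc n) x) (at x)"
        by (rule has_field_derivative_transform_within_open[OF d, of "{R<..}"]) (use x Suc in auto)
      then show "F (Suc n) x = 0"
        using DERIV_unique DERIV_const by blast
    qed
  qed
  then show ?thesis using that[of R] by (auto simp: R_def)
qed

lemma smooth_bounded:
  assumes "smooth_cc F"
  obtains B where "B \<ge> 0" "\<And>x. x \<ge> 0 \<Longrightarrow> \<bar>F n x\<bar> \<le> B"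
proof -
  obtain R where R: "R \<ge> 0" "\<And>n x. x > R \<Longrightarrow> F n x = 0"
    using smooth_vanish[OF assms] by blast
  have "continuous_on {0..} (F n)"
    unfolding continuous_on_eq_continuous_within
  proof
    fix x :: real assume "x \<in> {0..}"
    then have "(F n has_field_derivative F (Suc n) x) (at x within {0..})"
      using assms unfolding smooth_cc_def by auto
    then show "continuous (at x within {0..}) (F n)" by (rule DERIV_continuous)
  qed
  then have "continuous_on {0..R} (F n)" by (rule continuous_on_subset) auto
  then have "bounded (F n ` {0..R})" by (intro compact_imp_bounded compact_continuous_image) auto
  then obtain B where B: "\<And>x. x \<in> {0..R} \<Longrightarrow> \<bar>F n x\<bar> \<le> B"
    unfolding bounded_iff by (metis atLeastAtMost_iff image_eqI real_norm_def)
  show ?thesis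
  proof (rule that[of "max B 0"])
    fix x :: real assume "x \<ge> 0"
    then show "\<bar>F n x\<bar> \<le> max B 0"
      using B[of x] R(2)[of x n] by (cases "x \<le> R") auto
  qed simp
qed

lemma smooth_taylor:
  assumes "smooth_cc F" "\<And>x. x \<ge> 0 \<Longrightarrow> \<bar>F 3 x\<bar> \<le> B" "w \<ge> 0" "z \<ge> 0"
  shows "\<bar>F 0 z - (F 0 w + F 1 w * (z - w) + F 2 w * (z - w)^2 / 2)\<bar> \<le> B * \<bar>z - w\<bar>^3 / 2"
proof -
  have "norm (F 0 z - (\<Sum>i\<le>2. F i w * (z-w) ^ i / (fact i))) \<le> B * norm(z - w)^(Suc 2) / fact 2"
    by (rule field_Taylor[where S="{0..}"]) (use assms in \<open>auto simp: smooth_cc_def numeral_3_eq_3\<close>)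
  then show ?thesis by (simp add: numeral_2_eq_2 numeral_3_eq_3)
qed

lemma point_bound:
  fixes \<alpha> lam :: real and F :: "nat \<Rightarrow> real \<Rightarrow> real"
  assumes a: "0 < \<alpha>" "\<alpha> \<le> 1/2" and sm: "smooth_cc F"
    and R: "R \<ge> 0" "\<And>n x. x > R \<Longrightarrow> F n x = 0"
    and b1: "\<And>x. x \<ge> 0 \<Longrightarrow> \<bar>F 1 x\<bar> \<le> B1"
    and b2: "\<And>x. x \<ge> 0 \<Longrightarrow> \<bar>F 2 x\<bar> \<le> B2"
    and b3: "\<And>x. x \<ge> 0 \<Longrightarrow> \<bar>F 3 x\<bar> \<le> B"
    and B: "B1 \<ge> 0" "B2 \<ge> 0" "B \<ge> 0"
    and N: "N \<ge> 1" and k: "k \<le> N"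
  shows "\<bar>gen_N \<alpha> lam N (F 0) k - gen_lim \<alpha> lam F (real k / real N powr \<alpha>)\<bar>
     \<le> ((R+1)*B + \<bar>lam\<bar>*(R+1)*(B2+B) + (R+1)^2*B1 + (R+1)^2*(\<bar>lam\<bar>*B1 + (1+\<bar>lam\<bar>)*(B2+B)))
        * (1 / real N powr \<alpha> + \<bar>(real N powr \<alpha>)^2 / real N - (if \<alpha> < 1/2 then 0 else 1)\<bar>)"
proof -
  define s where "s = real N powr \<alpha>"
  define Y where "Y = R + 1"
  define \<gamma> :: real where "\<gamma> = (if \<alpha> < 1/2 then 0 else 1)"
  define C where "C = Y*B + \<bar>lam\<bar>*Y*(B2+B) + Y^2*B1 + Y^2*(\<bar>lam\<bar>*B1 + (1+\<bar>lam\<bar>)*(B2+B))"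
  define p where "p = s^2 / real N"
  define y where "y = real k / s"
  define f where "f = F 0"
  have s1: "s \<ge> 1" unfolding s_def using N a by (intro ge_one_powr_ge_zero) auto
  have N0: "real N > 0" using N by simp
  have p: "0 \<le> p" "p \<le> 1"
  proof -
    have "s^2 = real N powr (2 * \<alpha>)" unfolding s_def using N0 by (simp add: powr_power)
    also have "\<dots> \<le> real N powr 1" using N a by (intro powr_mono) auto
    finally show "p \<le> 1" unfolding p_def using N0 by simp
  qed (simp add: p_def)
  have C0: "C \<ge> 0" unfolding C_def Y_def using R B by simp
  have rhs0: "0 \<le> C * (1 / s + \<bar>p - \<gamma>\<bar>)" using C0 s1 by simp
  have gl: "gen_lim \<alpha> lam F y = lam * y * F 1 y + y * F 2 y - \<gamma> * y^2 * F 1 y"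
    unfolding gen_lim_def \<gamma>_def by (simp add: algebra_simps power2_eq_square)
  have gN: "gen_N \<alpha> lam N f k = s * ((1 + lam / s) * real k * (1 - real k / real N) * (f (y + 1/s) - f y)
      + real k * (f (y - 1/s) - f y))"
  proof -
    have "gen_N \<alpha> lam N f k = s * (\<Sum>z\<in>{0..N}. sis_Q N (beta_N \<alpha> lam N) k z * f (real z / s))"
      using gen_N_eq[OF k] unfolding s_def .
    also have "\<dots> = s * (beta_N \<alpha> lam N * real k * (1 - real k / real N) * (f (real (Suc k) / s) - f (real k / s))
        + real k * (f (real (k - 1) / s) - f (real k / s)))"
      using sumQ[OF k, where g="\<lambda>z. f (real z / s)"] N by simp
    also have "\<dots> = s * ((1 + lam / s) * real k * (1 - real k / real N) * (f (y + 1/s) - f y)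
      + real k * (f (y - 1/s) - f y))"
    proof (cases "k = 0")
      case True then show ?thesis by simp
    next
      case False
      then show ?thesis unfolding y_def beta_N_def s_def[symmetric] using s1
        by (simp add: of_nat_diff add_divide_distrib diff_divide_distrib add.commute)
    qed
    finally show ?thesis .
  qed
  have "\<bar>gen_N \<alpha> lam N f k - gen_lim \<alpha> lam F y\<bar> \<le> C * (1 / s + \<bar>p - \<gamma>\<bar>)"
  proof (cases "k = 0 \<or> y > Y")
    case True
    have "gen_N \<alpha> lam N f k = 0 \<and> gen_lim \<alpha> lam F y = 0"
    proof (cases "k = 0")
      case True then show ?thesis using gN gl by (simp add: y_def)
    next
      case False
      with \<open>k = 0 \<or> y > Y\<close> have yY: "y > Y" by simp
      have "1 / s \<le> 1" "0 < 1 / s" using s1 by simp_all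
      then have "y - 1/s > R" "y > R" "y + 1/s > R" using yY s1 \<open>1 / s \<le> 1\<close> unfolding Y_def by linarith+
      then show ?thesis using gN gl R(2) unfolding f_def by simp
    qed
    then show ?thesis using rhs0 by simp
  next
    case False
    then have k1: "k \<ge> 1" and yY: "y \<le> Y" by auto
    have y0: "0 \<le> y" using s1 by (simp add: y_def)
    have ym: "y - 1/s \<ge> 0" using k1 s1 by (simp add: y_def divide_right_mono diff_divide_distrib[symmetric])
    define rp where "rp = (f (y + 1/s) - f y) - (F 1 y / s + F 2 y / (2 * s^2))"
    define rm where "rm = (f (y - 1/s) - f y) - (- F 1 y / s + F 2 y / (2 * s^2))"
    have rp: "\<bar>rp\<bar> \<le> B / (2 * s^3)"
      using smooth_taylor[OF sm b3 y0, of "y + 1/s"] y0 s1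
      by (simp add: rp_def f_def power_one_over power2_eq_square power3_eq_cube algebra_simps)
    have rm: "\<bar>rm\<bar> \<le> B / (2 * s^3)"
      using smooth_taylor[OF sm b3 y0 ym] s1
      by (simp add: rm_def f_def power_one_over power2_eq_square power3_eq_cube algebra_simps)
    have key': "\<bar>s * ((1 + lam / s) * (s * y) * (1 - p * y / s) * (f (y + 1/s) - f y) + (s * y) * (f (y - 1/s) - f y))
           - (lam * y * F 1 y + y * F 2 y - \<gamma> * y^2 * F 1 y)\<bar>
         \<le> C * (1/s + \<bar>p - \<gamma>\<bar>)"
      unfolding C_def
      by (rule key[OF s1 y0 yY b1[OF y0] b2[OF y0] rp rm p]) (simp_all add: rp_def rm_def)
    have "s * y = real k" "p * y / s = real k / real N" using s1 N0
      by (simp_all add: y_def p_def power2_eq_square)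
    then show ?thesis using key' gN gl by simp
  qed
  then show ?thesis unfolding f_def y_def s_def C_def Y_def p_def \<gamma>_def .
qed

theorem lemma1:
  fixes \<alpha> lam :: real and F :: "nat \<Rightarrow> real \<Rightarrow> real"
  assumes "0 < \<alpha>" and "\<alpha> \<le> 1/2"
    and "smooth_cc F"
  shows "(\<lambda>N. SUP k\<in>{0..N}.
            \<bar>gen_N \<alpha> lam N (F 0) k - gen_lim \<alpha> lam F (real k / real N powr \<alpha>)\<bar>)
         \<longlonglongrightarrow> 0"
proof -
  obtain R where R: "R \<ge> 0" "\<And>n x. x > R \<Longrightarrow> F n x = 0"
    using smooth_vanish[OF assms(3)] by blast
  obtain B1 where B1: "B1 \<ge> 0" "\<And>x. x \<ge> 0 \<Longrightarrow> \<bar>F 1 x\<bar> \<le> B1"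
    using smooth_bounded[OF assms(3)] by blast
  obtain B2 where B2: "B2 \<ge> 0" "\<And>x. x \<ge> 0 \<Longrightarrow> \<bar>F 2 x\<bar> \<le> B2"
    using smooth_bounded[OF assms(3)] by blast
  obtain B where B: "B \<ge> 0" "\<And>x. x \<ge> 0 \<Longrightarrow> \<bar>F 3 x\<bar> \<le> B"
    using smooth_bounded[OF assms(3)] by blast
  define C where "C = (R+1)*B + \<bar>lam\<bar>*(R+1)*(B2+B) + (R+1)^2*B1 + (R+1)^2*(\<bar>lam\<bar>*B1 + (1+\<bar>lam\<bar>)*(B2+B))"
  define \<gamma> :: real where "\<gamma> = (if \<alpha> < 1/2 then 0 else 1)"
  define e where "e N = C * (1 / real N powr \<alpha> + \<bar>(real N powr \<alpha>)^2 / real N - \<gamma>\<bar>)" for N :: nat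
  define G where "G N = (SUP k\<in>{0..N}.
            \<bar>gen_N \<alpha> lam N (F 0) k - gen_lim \<alpha> lam F (real k / real N powr \<alpha>)\<bar>)" for N
  have up: "G N \<le> e N" if N: "N \<ge> 1" for N
    unfolding G_def e_def C_def \<gamma>_def
    by (rule cSUP_least) (use point_bound[OF assms R B1(2) B2(2) B(2) B1(1) B2(1) B(1) N] in auto)
  have lo: "0 \<le> G N" for N
  proof -
    have "bdd_above ((\<lambda>k. \<bar>gen_N \<alpha> lam N (F 0) k - gen_lim \<alpha> lam F (real k / real N powr \<alpha>)\<bar>) ` {0..N})"
      by (rule bdd_above_finite) simp
    then show ?thesis unfolding G_def by (rule cSUP_upper2[of _ _ 0]) auto
  qed
  have r: "real N powr \<alpha> > 0" if "N \<ge> 1" for N using that by simp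
  have e1: "(\<lambda>N. 1 / real N powr \<alpha>) \<longlonglongrightarrow> 0"
    unfolding powr_minus_divide[symmetric]
    by (rule tendsto_neg_powr) (use assms filterlim_real_sequentially in auto)
  have e2: "(\<lambda>N. \<bar>(real N powr \<alpha>)^2 / real N - \<gamma>\<bar>) \<longlonglongrightarrow> 0"
  proof (cases "\<alpha> < 1/2")
    case True
    have ev: "\<forall>\<^sub>F N in sequentially. real N powr (2 * \<alpha> - 1) = \<bar>(real N powr \<alpha>)^2 / real N - \<gamma>\<bar>"
      using eventually_ge_at_top[of 1]
    proof eventually_elim
      case (elim N)
      then have "(real N powr \<alpha>)^2 / real N = real N powr (2 * \<alpha> - 1)"
        by (simp add: powr_power powr_diff)
      then show ?case using True by (simp add: \<gamma>_def)
    qed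
    have "(\<lambda>N. real N powr (2 * \<alpha> - 1)) \<longlonglongrightarrow> 0"
      by (rule tendsto_neg_powr) (use True filterlim_real_sequentially in auto)
    then show ?thesis using ev by (rule Lim_transform_eventually)
  next
    case False
    then have ah: "\<alpha> = 1/2" using assms by simp
    have ev: "\<forall>\<^sub>F N in sequentially. 0 = \<bar>(real N powr \<alpha>)^2 / real N - \<gamma>\<bar>"
      using eventually_ge_at_top[of 1]
    proof eventually_elim
      case (elim N)
      then have "(real N powr \<alpha>)^2 = real N" using ah
        by (simp add: powr_power mult.commute)
      then show ?case using False elim by (simp add: \<gamma>_def)
    qed
    show ?thesis using tendsto_const ev by (rule Lim_transform_eventually)
  qed
  have "e \<longlonglongrightarrow> C * (0 + 0)" unfolding e_def by (intro tendsto_intros e1 e2)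
  then have e0: "e \<longlonglongrightarrow> 0" by simp
  have "G \<longlonglongrightarrow> 0"
    by (rule tendsto_sandwich[OF _ _ tendsto_const e0])
       (use lo in simp, use eventually_ge_at_top[of 1] in \<open>rule eventually_mono\<close>, use up in simp)
  then show ?thesis unfolding G_def .
qed

end
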